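(* For the localized tent shears described in the context, the two point process $(\phi_n(x),\phi_n(y))$ on $\mathcal D^c=\mathbb T^2\times\mathbb T^2\setminus\{(x,x)\}$ is irreducible.
   Context: Let $F_0$ be the $1$-periodic piecewise linear function with $F_0(\frac12\pm\frac18)=0$, $F_0(\frac12)=1$, linear on $[\frac38,\frac12]$ and $[\frac12,\frac58]$, and zero on $[0,1]\setminus[\frac38,\frac58]$; $F_\alpha(x)=F_0(x-\alpha)$; $v_{\alpha,1}(x)=(F_\alpha(x_2),0)$, $v_{\alpha,2}(x)=(0,F_\alpha(x_1))$ on $\mathbb T^2$. Let $(\alpha_n,\beta_n,i_n)_{n\ge1}$ be i.i.d. uniform on $[0,1]\times[0,1]\times\{1,2\}$, $V_n=\beta_nv_{\alpha_n,i_n}$, $\varphi^w$ the time-1 flow of $w$, and $\phi_n=\varphi^{V_n}\circ\cdots\circ\varphi^{V_1}$. A Markov chain on state space $E$ is irreducible if for every $z\in E$ and nonempty open $O\subseteq E$ there is $n$ with $\mathbb P(Z_n\in O\mid Z_0=z)>0$. *)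

theory Defs
  imports "HOL-Probability.Probability"
begin

text \<open>Points of the torus T^2 are represented by their lifts in R^2 = real \<times> real;
  two lifts represent the same torus point iff their difference lies in the lattice Z^2.\<close>

definition lat :: "(real \<times> real) set" where
  "lat = {(a, b). a \<in> \<int> \<and> b \<in> \<int>}"

definition teq :: "real \<times> real \<Rightarrow> real \<times> real \<Rightarrow> bool" where
  "teq p q \<longleftrightarrow> p - q \<in> lat"

definition Dc_lift :: "((real \<times> real) \<times> (real \<times> real)) set" where
  "Dc_lift = {(p, q). \<not> teq p q}"

definition F0 :: "real \<Rightarrow> real" where
  "F0 x = (let t = frac x in
     if 3/8 \<le> t \<and> t \<le> 1/2 then 8 * (t - 3/8)
     else if 1/2 < t \<and> t \<le> 5/8 then 8 * (5/8 - t)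
     else 0)"

definition Fa :: "real \<Rightarrow> real \<Rightarrow> real" where
  "Fa \<alpha> x = F0 (x - \<alpha>)"

definition vfield :: "real \<Rightarrow> nat \<Rightarrow> real \<times> real \<Rightarrow> real \<times> real" where
  "vfield \<alpha> i x = (if i = 1 then (Fa \<alpha> (snd x), 0) else (0, Fa \<alpha> (fst x)))"

definition flow1 :: "(real \<times> real \<Rightarrow> real \<times> real) \<Rightarrow> real \<times> real \<Rightarrow> real \<times> real" where
  "flow1 w x = (THE y. \<exists>\<gamma>. \<gamma> 0 = x \<and> (\<forall>t. (\<gamma> has_vector_derivative w (\<gamma> t)) (at t)) \<and> \<gamma> 1 = y)"

definition param_measure :: "(real \<times> real \<times> nat) measure" where
  "param_measure = uniform_measure lborel {0..1::real} \<Otimes>\<^sub>M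
     (uniform_measure lborel {0..1::real} \<Otimes>\<^sub>M measure_pmf (pmf_of_set {1, 2::nat}))"

text \<open>The i.i.d. sequence: omega n is the triple (alpha_{n+1}, beta_{n+1}, i_{n+1}).\<close>
definition Omega :: "(nat \<Rightarrow> real \<times> real \<times> nat) measure" where
  "Omega = (\<Pi>\<^sub>M n\<in>UNIV. param_measure)"

definition Vn :: "real \<times> real \<times> nat \<Rightarrow> real \<times> real \<Rightarrow> real \<times> real" where
  "Vn a x = (case a of (\<alpha>, \<beta>, i) \<Rightarrow> \<beta> *\<^sub>R vfield \<alpha> i x)"

fun phi :: "(nat \<Rightarrow> real \<times> real \<times> nat) \<Rightarrow> nat \<Rightarrow> real \<times> real \<Rightarrow> real \<times> real" where
  "phi \<omega> 0 = id"
| "phi \<omega> (Suc n) = flow1 (Vn (\<omega> n)) \<circ> phi \<omega> n"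

end

theory Submission
  imports Defs
begin


lemma vd_fst: "(\<gamma> has_vector_derivative v) (at t) \<Longrightarrow> ((\<lambda>t. fst (\<gamma> t)) has_vector_derivative fst v) (at t)"
  unfolding has_vector_derivative_def
  by (drule has_derivative_fst) simp

lemma vd_snd: "(\<gamma> has_vector_derivative v) (at t) \<Longrightarrow> ((\<lambda>t. snd (\<gamma> t)) has_vector_derivative snd v) (at t)"
  unfolding has_vector_derivative_def
  by (drule has_derivative_snd) simp

lemma ode1:
  fixes \<gamma> :: "real \<Rightarrow> real \<times> real"
  assumes "\<forall>t. (\<gamma> has_vector_derivative (c * g (snd (\<gamma> t)), 0)) (at t)"
  shows "\<gamma> 1 = (fst (\<gamma> 0) + c * g (snd (\<gamma> 0)), snd (\<gamma> 0))"
proof -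
  have d2: "((\<lambda>t. snd (\<gamma> t)) has_vector_derivative 0) (at t within UNIV)" for t
    using vd_snd[OF assms[rule_format, of t]] by simp
  obtain k where k: "\<And>t. snd (\<gamma> t) = k"
    using has_vector_derivative_zero_constant[of UNIV "\<lambda>t. snd (\<gamma> t)"] d2 by auto
  have d1: "((\<lambda>t. fst (\<gamma> t) - t * (c * g k)) has_vector_derivative 0) (at t within UNIV)" for t
  proof -
    have "((\<lambda>t. fst (\<gamma> t)) has_vector_derivative c * g k) (at t)"
      using vd_fst[OF assms[rule_format, of t]] k by simp
    moreover have "((\<lambda>t. t * (c * g k)) has_vector_derivative c * g k) (at t)"
      by (auto intro!: derivative_eq_intros)
    ultimately show ?thesis using has_vector_derivative_diff by fastforce
  qed
  obtain m where m: "\<And>t. fst (\<gamma> t) - t * (c * g k) = m"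
    using has_vector_derivative_zero_constant[of UNIV "\<lambda>t. fst (\<gamma> t) - t * (c * g k)"] d1 by auto
  from m[of 0] m[of 1] k[of 0] k[of 1] show ?thesis by (simp add: prod_eq_iff)
qed

lemma ode2:
  fixes \<gamma> :: "real \<Rightarrow> real \<times> real"
  assumes "\<forall>t. (\<gamma> has_vector_derivative (0, c * g (fst (\<gamma> t)))) (at t)"
  shows "\<gamma> 1 = (fst (\<gamma> 0), snd (\<gamma> 0) + c * g (fst (\<gamma> 0)))"
proof -
  let ?d = "\<lambda>t. prod.swap (\<gamma> t)"
  have "\<forall>t. (?d has_vector_derivative (c * g (snd (?d t)), 0)) (at t)"
  proof
    fix t
    have "((\<lambda>t. (snd (\<gamma> t), fst (\<gamma> t))) has_vector_derivative (snd (0::real, c * g (fst (\<gamma> t))), fst (0::real, c * g (fst (\<gamma> t))))) (at t)"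
      using vd_snd[OF assms[rule_format, of t]] vd_fst[OF assms[rule_format, of t]]
      by (intro has_vector_derivative_Pair) assumption+
    then show "(?d has_vector_derivative (c * g (snd (?d t)), 0)) (at t)"
      by (simp add: prod.swap_def)
  qed
  from ode1[OF this] show ?thesis by (simp add: prod_eq_iff prod.swap_def)
qed

definition shear :: "real \<Rightarrow> real \<Rightarrow> nat \<Rightarrow> real \<times> real \<Rightarrow> real \<times> real" where
  "shear \<alpha> \<beta> i x = (if i = 1 then (fst x + \<beta> * Fa \<alpha> (snd x), snd x)
                     else (fst x, snd x + \<beta> * Fa \<alpha> (fst x)))"

lemma flow1_shear: "flow1 (Vn (\<alpha>, \<beta>, i)) x = shear \<alpha> \<beta> i x"
  unfolding flow1_def
proof (rule the_equality)
  show "\<exists>\<gamma>. \<gamma> 0 = x \<and> (\<forall>t. (\<gamma> has_vector_derivative Vn (\<alpha>, \<beta>, i) (\<gamma> t)) (at t)) \<and> \<gamma> 1 = shear \<alpha> \<beta> i x"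
  proof (cases "i = 1")
    case True
    let ?g = "\<lambda>t::real. (fst x + t * (\<beta> * Fa \<alpha> (snd x)), snd x)"
    have "(?g has_vector_derivative Vn (\<alpha>, \<beta>, i) (?g t)) (at t)" for t
    proof -
      have "((\<lambda>t. fst x + t * (\<beta> * Fa \<alpha> (snd x))) has_real_derivative (\<beta> * Fa \<alpha> (snd x))) (at t)"
        by (auto intro!: derivative_eq_intros)
      then have "(?g has_vector_derivative (\<beta> * Fa \<alpha> (snd x), 0)) (at t)"
        by (intro has_vector_derivative_Pair) (auto simp: has_real_derivative_iff_has_vector_derivative)
      then show ?thesis using True by (simp add: Vn_def vfield_def)
    qed
    then show ?thesis using True by (intro exI[of _ ?g]) (auto simp: shear_def)
  next
    case False
    let ?g = "\<lambda>t::real. (fst x, snd x + t * (\<beta> * Fa \<alpha> (fst x)))"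
    have "(?g has_vector_derivative Vn (\<alpha>, \<beta>, i) (?g t)) (at t)" for t
    proof -
      have "((\<lambda>t. snd x + t * (\<beta> * Fa \<alpha> (fst x))) has_real_derivative (\<beta> * Fa \<alpha> (fst x))) (at t)"
        by (auto intro!: derivative_eq_intros)
      then have "(?g has_vector_derivative (0, \<beta> * Fa \<alpha> (fst x))) (at t)"
        by (intro has_vector_derivative_Pair) (auto simp: has_real_derivative_iff_has_vector_derivative)
      then show ?thesis using False by (simp add: Vn_def vfield_def)
    qed
    then show ?thesis using False by (intro exI[of _ ?g]) (auto simp: shear_def)
  qed
next
  fix y assume "\<exists>\<gamma>. \<gamma> 0 = x \<and> (\<forall>t. (\<gamma> has_vector_derivative Vn (\<alpha>, \<beta>, i) (\<gamma> t)) (at t)) \<and> \<gamma> 1 = y"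
  then obtain \<gamma> where g: "\<gamma> 0 = x" "\<forall>t. (\<gamma> has_vector_derivative Vn (\<alpha>, \<beta>, i) (\<gamma> t)) (at t)" "\<gamma> 1 = y"
    by blast
  show "y = shear \<alpha> \<beta> i x"
  proof (cases "i = 1")
    case True
    have "\<forall>t. (\<gamma> has_vector_derivative (\<beta> * Fa \<alpha> (snd (\<gamma> t)), 0)) (at t)"
      using g(2) True by (simp add: Vn_def vfield_def)
    from ode1[OF this] g True show ?thesis by (simp add: shear_def)
  next
    case False
    have "\<forall>t. (\<gamma> has_vector_derivative (0, \<beta> * Fa \<alpha> (fst (\<gamma> t)))) (at t)"
      using g(2) False by (simp add: Vn_def vfield_def)
    from ode2[OF this] g False show ?thesis by (simp add: shear_def)
  qed
qed

lemma F0_add_int [simp]: "F0 (x + of_int n) = F0 x"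
  by (simp add: F0_def)

lemma F0_add_Ints: "n \<in> \<int> \<Longrightarrow> F0 (x + n) = F0 x"
  by (auto elim!: Ints_cases)

lemma F0_alt: "F0 x = max 0 (1 - 8 * \<bar>frac x - 1/2\<bar>)"
  unfolding F0_def Let_def using frac_ge_0[of x] frac_lt_1[of x]
  by (auto simp: max_def abs_if)

lemma F0_neg: "F0 (- x) = F0 x"
proof (cases "x \<in> \<int>")
  case True
  then have fx: "frac x = 0" by simp
  show ?thesis using True by (simp add: F0_alt frac_neg fx)
next
  case False
  then show ?thesis by (simp add: F0_alt frac_neg abs_if)
qed

lemma F0_ge0: "0 \<le> F0 x" by (simp add: F0_alt)
lemma F0_le1: "F0 x \<le> 1" by (simp add: F0_alt)

lemma F0_val:
  assumes "0 \<le> y" "y < 1"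
  shows "F0 y = max 0 (1 - 8 * \<bar>y - 1/2\<bar>)"
  using assms by (simp add: F0_alt)

lemma F0_cont: "isCont F0 x"
proof (cases "x \<in> \<int>")
  case False
  have "isCont (\<lambda>x. max 0 (1 - 8 * \<bar>frac x - 1/2\<bar>)) x"
    using continuous_frac[OF False] by (intro continuous_intros) (auto simp: isCont_def)
  then show ?thesis by (simp add: F0_alt[abs_def])
next
  case True
  then obtain n where n: "x = of_int n" by (auto elim: Ints_cases)
  have "\<forall>\<^sub>F y in nhds x. F0 y = 0"
    unfolding eventually_nhds_metric
  proof (intro exI[of _ "3/8"] conjI allI impI)
    fix y :: real assume "dist y x < 3/8"
    then have d: "\<bar>y - of_int n\<bar> < 3/8" using n by (simp add: dist_real_def)
    show "F0 y = 0"
    proof (cases "y \<ge> of_int n")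
      case True
      then have "frac y = y - of_int n" by (subst frac_unique_iff) (use d in auto)
      then show ?thesis using True d by (simp add: F0_alt)
    next
      case False
      then have "frac y = y - of_int n + 1"
        by (subst frac_unique_iff) (use d in \<open>auto simp: algebra_simps\<close>)
      then show ?thesis using False d by (simp add: F0_alt)
    qed
  qed simp
  then have "isCont F0 x \<longleftrightarrow> isCont (\<lambda>_. 0::real) x" by (rule isCont_cong)
  then show ?thesis by simp
qed

lemma F0_continuous_on: "continuous_on A F0"
  using F0_cont by (simp add: continuous_at_imp_continuous_on)

lemma F0_half: "F0 (1/2) = 1" by (simp add: F0_def)
lemma F0_38: "F0 (3/8) = 0" by (simp add: F0_def)
lemma F0_58: "F0 (5/8) = 0" by (simp add: F0_def)



type_synonym pp = "(real \<times> real) \<times> (real \<times> real)"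

definition step2 :: "real \<Rightarrow> real \<Rightarrow> nat \<Rightarrow> pp \<Rightarrow> pp" where
  "step2 \<alpha> \<beta> i P = (shear \<alpha> \<beta> i (fst P), shear \<alpha> \<beta> i (snd P))"

definition latp :: "pp set" where
  "latp = {K. fst K \<in> lat \<and> snd K \<in> lat}"

lemma lat_iff: "(a, b) \<in> lat \<longleftrightarrow> a \<in> \<int> \<and> b \<in> \<int>"
  by (simp add: lat_def)

inductive one :: "pp \<Rightarrow> pp \<Rightarrow> bool" where
  one_step: "0 \<le> \<beta> \<Longrightarrow> \<beta> \<le> 1 \<Longrightarrow> i \<in> {1, 2} \<Longrightarrow> one P (step2 \<alpha> \<beta> i P)"
| one_lat: "K \<in> latp \<Longrightarrow> one P (P + K)"

abbreviation reach :: "pp \<Rightarrow> pp \<Rightarrow> bool" where "reach \<equiv> one\<^sup>*\<^sup>*"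

lemma reach_step: "0 \<le> \<beta> \<Longrightarrow> \<beta> \<le> 1 \<Longrightarrow> i \<in> {1, 2} \<Longrightarrow> Q = step2 \<alpha> \<beta> i P \<Longrightarrow> reach P Q"
  using one_step by blast

lemma reach_lat: "K \<in> latp \<Longrightarrow> Q = P + K \<Longrightarrow> reach P Q"
  using one_lat by blast

lemma shear_neg: "shear (-\<alpha>) \<beta> i (- shear \<alpha> \<beta> i p) = - p"
proof -
  have "F0 (\<alpha> - b) = F0 (b - \<alpha>)" for b
    using F0_neg[of "b - \<alpha>"] by simp
  then show ?thesis by (simp add: shear_def Fa_def prod_eq_iff)
qed

lemma one_rev: "one P Q \<Longrightarrow> one (- Q) (- P)"
proof (induction rule: one.induct)
  case (one_step \<beta> i P \<alpha>)
  have "- P = step2 (-\<alpha>) \<beta> i (- step2 \<alpha> \<beta> i P)"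
    by (simp add: step2_def shear_neg prod_eq_iff)
  then show ?case using one.one_step[OF one_step] by metis
next
  case (one_lat K P)
  have "- P = - (P + K) + K" by simp
  then show ?case using one.one_lat[OF one_lat] by metis
qed

lemma reach_rev: "reach P Q \<Longrightarrow> reach (- Q) (- P)"
proof (induction rule: rtranclp_induct)
  case base then show ?case by simp
next
  case (step Q R)
  then show ?case using one_rev[OF step(2)] by (meson converse_rtranclp_into_rtranclp)
qed

definition sw :: "pp \<Rightarrow> pp" where "sw P = (snd P, fst P)"
definition cs :: "pp \<Rightarrow> pp" where "cs P = (prod.swap (fst P), prod.swap (snd P))"

lemma sw_sw [simp]: "sw (sw P) = P" by (simp add: sw_def)
lemma cs_cs [simp]: "cs (cs P) = P" by (simp add: cs_def)

lemma one_sw: "one P Q \<Longrightarrow> one (sw P) (sw Q)"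
proof (induction rule: one.induct)
  case (one_step \<beta> i P \<alpha>)
  have "sw (step2 \<alpha> \<beta> i P) = step2 \<alpha> \<beta> i (sw P)" by (simp add: sw_def step2_def)
  then show ?case using one.one_step[OF one_step] by metis
next
  case (one_lat K P)
  have "sw (P + K) = sw P + sw K" "sw K \<in> latp" using one_lat by (auto simp: sw_def latp_def)
  then show ?case using one.one_lat by metis
qed

lemma reach_sw: "reach P Q \<Longrightarrow> reach (sw P) (sw Q)"
proof (induction rule: rtranclp_induct)
  case base then show ?case by simp
next
  case (step Q R)
  then show ?case using one_sw[OF step(2)] by (meson rtranclp.rtrancl_into_rtrancl)
qed

lemma shear_swap: "i \<in> {1,2} \<Longrightarrow> shear \<alpha> \<beta> i (prod.swap p) = prod.swap (shear \<alpha> \<beta> (3 - i) p)"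
  by (auto simp: shear_def)

lemma one_cs: "one P Q \<Longrightarrow> one (cs P) (cs Q)"
proof (induction rule: one.induct)
  case (one_step \<beta> i P \<alpha>)
  have "cs (step2 \<alpha> \<beta> i P) = step2 \<alpha> \<beta> (3 - i) (cs P)"
    using one_step(3) by (auto simp: cs_def step2_def shear_def)
  moreover have "3 - i \<in> {1, 2}" using one_step(3) by auto
  ultimately show ?case using one.one_step[OF one_step(1,2)] by metis
next
  case (one_lat K P)
  have "cs (P + K) = cs P + cs K" "cs K \<in> latp" using one_lat
    by (auto simp: cs_def latp_def lat_def prod.swap_def)
  then show ?case using one.one_lat by metis
qed

lemma reach_cs: "reach P Q \<Longrightarrow> reach (cs P) (cs Q)"
proof (induction rule: rtranclp_induct)
  case base then show ?case by simp
next
  case (step Q R)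
  then show ?case using one_cs[OF step(2)] by (meson rtranclp.rtrancl_into_rtrancl)
qed

definition cd :: "real \<Rightarrow> real" where "cd u = \<bar>u - of_int (round u)\<bar>"

lemma cd_char:
  assumes "\<bar>x\<bar> \<le> 1/2" "u - x \<in> \<int>"
  shows "cd u = \<bar>x\<bar>"
proof -
  define y where "y = u - of_int (round u)"
  have y: "\<bar>y\<bar> \<le> 1/2" using of_int_round_abs_le[of u] by (simp add: y_def abs_minus_commute)
  from assms(2) obtain j where j: "u - x = of_int j" by (auto elim: Ints_cases)
  have k: "x - y = of_int (round u - j)" using j by (simp add: y_def)
  define k where "k = round u - j"
  have "of_int k \<le> (1::real)" "-1 \<le> (of_int k::real)" using assms(1) y k
    by (simp_all add: k_def abs_le_iff)
  then have "k \<le> 1" "-1 \<le> k" by linarith+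
  then have "k = -1 \<or> k = 0 \<or> k = 1" by arith
  then have "\<bar>x\<bar> = \<bar>y\<bar>" using k assms(1) y unfolding k_def[symmetric]
    by (auto simp: abs_le_iff abs_if)
  then show ?thesis by (simp add: cd_def y_def)
qed

lemma cd_rep: "\<bar>u - of_int (round u)\<bar> \<le> 1/2"
  using of_int_round_abs_le[of u] by (simp add: abs_minus_commute)

lemma cd_ge0: "0 \<le> cd u" by (simp add: cd_def)
lemma cd_le: "cd u \<le> 1/2" using cd_rep by (simp add: cd_def)

lemma cd_shift: "v - u \<in> \<int> \<Longrightarrow> cd v = cd u"
proof -
  assume a: "v - u \<in> \<int>"
  have "v - (u - of_int (round u)) \<in> \<int>"
  proof -
    have e: "v - (u - of_int (round u)) = (v - u) + of_int (round u)" by simp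
    show ?thesis unfolding e by (rule Ints_add[OF a Ints_of_int])
  qed
  from cd_char[OF cd_rep this] show ?thesis by (simp add: cd_def)
qed

lemma cd_neg: "cd (- u) = cd u"
proof -
  have "- u - (- (u - of_int (round u))) \<in> \<int>" by simp
  from cd_char[OF _ this] cd_rep[of u] show ?thesis by (simp add: cd_def abs_minus_commute)
qed

lemma cd_sym: "cd (a - b) = cd (b - a)"
  using cd_neg[of "a - b"] by simp

lemma cd_eq0: "cd u = 0 \<longleftrightarrow> u \<in> \<int>"
proof
  assume "cd u = 0" then have "u = of_int (round u)" by (simp add: cd_def)
  then show "u \<in> \<int>" by (metis Ints_of_int)
next
  assume "u \<in> \<int>" then show "cd u = 0"
    using cd_char[of 0 u] by simp
qed

lemma cd_half: "cd (1/2) = 1/2"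
  using cd_char[of "1/2" "1/2"] by simp



lemma Fzero:
  assumes "1/8 \<le> cd v"
  shows "F0 (v + 1/2) = 0"
proof -
  define x where "x = v - of_int (round v)"
  have x: "\<bar>x\<bar> \<le> 1/2" "\<bar>x\<bar> = cd v" using cd_rep[of v] by (simp_all add: x_def cd_def)
  have "F0 (v + 1/2) = F0 ((x + 1/2) + of_int (round v))" by (simp add: x_def)
  also have "\<dots> = F0 (x + 1/2)" by (rule F0_add_int)
  also have "\<dots> = 0"
  proof (cases "x < 1/2")
    case True
    then have "0 \<le> x + 1/2" "x + 1/2 < 1" using x by auto
    from F0_val[OF this] show ?thesis using x assms by simp
  next
    case False
    then have "x = 1/2" using x by simp
    then have "x + 1/2 = 0 + of_int 1" by simp
    then have "F0 (x + 1/2) = F0 (0 + of_int 1)" by simp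
    also have "\<dots> = F0 0" by (rule F0_add_int)
    finally show ?thesis by (simp add: F0_def)
  qed
  finally show ?thesis .
qed

lemma move_p1:
  assumes "1/8 \<le> cd (p2 - q2)"
  shows "reach ((p1,p2),(q1,q2)) ((t,p2),(q1,q2))"
proof -
  define \<beta> where "\<beta> = frac (t - p1)"
  define \<alpha> where "\<alpha> = p2 - 1/2"
  have F1: "Fa \<alpha> p2 = 1" by (simp add: Fa_def \<alpha>_def F0_half)
  have "F0 ((q2 - p2) + 1/2) = 0" using assms cd_sym[of p2 q2] by (intro Fzero) simp
  then have F2: "Fa \<alpha> q2 = 0" by (simp add: Fa_def \<alpha>_def algebra_simps)
  have s: "step2 \<alpha> \<beta> 1 ((p1,p2),(q1,q2)) = ((p1 + \<beta>, p2),(q1,q2))"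
    by (simp add: step2_def shear_def F1 F2)
  have r1: "reach ((p1,p2),(q1,q2)) ((p1 + \<beta>, p2),(q1,q2))"
    by (rule reach_step[OF _ _ _ s[symmetric]]) (auto simp: \<beta>_def less_imp_le[OF frac_lt_1])
  have K: "((of_int \<lfloor>t - p1\<rfloor>, 0), (0, 0)) \<in> latp" by (simp add: latp_def lat_def)
  have e: "((t,p2),(q1,q2)) = ((p1 + \<beta>, p2),(q1,q2)) + ((of_int \<lfloor>t - p1\<rfloor>, 0), (0, 0))"
    by (simp add: \<beta>_def frac_def)
  have r2: "reach ((p1 + \<beta>, p2),(q1,q2)) ((t,p2),(q1,q2))"
    by (rule reach_lat[OF K e])
  show ?thesis using r1 r2 by (rule rtranclp_trans)
qed

lemma move_q1:
  assumes "1/8 \<le> cd (p2 - q2)"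
  shows "reach ((p1,p2),(q1,q2)) ((p1,p2),(t,q2))"
proof -
  have "1/8 \<le> cd (q2 - p2)" using assms cd_sym[of p2 q2] by simp
  from reach_sw[OF move_p1[OF this, of q1 p1 t]] show ?thesis by (simp add: sw_def)
qed

lemma move_p2:
  assumes "1/8 \<le> cd (p1 - q1)"
  shows "reach ((p1,p2),(q1,q2)) ((p1,t),(q1,q2))"
  using reach_cs[OF move_p1[OF assms, of p2 q2 t]] by (simp add: cs_def)

lemma move_q2:
  assumes "1/8 \<le> cd (p1 - q1)"
  shows "reach ((p1,p2),(q1,q2)) ((p1,p2),(q1,t))"
  using reach_cs[OF move_q1[OF assms, of p2 q2 t]] by (simp add: cs_def)

lemma Fgrow:
  assumes "cd (a - b) \<le> 1/8"
  shows "\<exists>\<alpha>. F0 (b - \<alpha>) = 0 \<and> F0 (a - \<alpha>) = 8 * cd (a - b)"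
proof -
  define x where "x = (a - b) - of_int (round (a - b))"
  have x: "\<bar>x\<bar> = cd (a - b)" by (simp add: x_def cd_def)
  show ?thesis
  proof (cases "0 \<le> x")
    case True
    have e: "a - (b - 3/8) = (x + 3/8) + of_int (round (a - b))" by (simp add: x_def)
    have "F0 (a - (b - 3/8)) = F0 (x + 3/8)" unfolding e by (rule F0_add_int)
    also have "\<dots> = 8 * cd (a - b)"
      using True x assms by (subst F0_val) (auto simp: abs_if max_def)
    finally show ?thesis by (intro exI[of _ "b - 3/8"]) (simp add: F0_38)
  next
    case False
    have e: "a - (b - 5/8) = (x + 5/8) + of_int (round (a - b))" by (simp add: x_def)
    have "F0 (a - (b - 5/8)) = F0 (x + 5/8)" unfolding e by (rule F0_add_int)
    also have "\<dots> = 8 * cd (a - b)"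
      using False x assms by (subst F0_val) (auto simp: abs_if max_def)
    finally show ?thesis by (intro exI[of _ "b - 5/8"]) (simp add: F0_58)
  qed
qed

lemma grow_p1:
  assumes "cd (p2 - q2) \<le> 1/8" "0 \<le> c" "c \<le> 8 * cd (p2 - q2)"
  shows "reach ((p1,p2),(q1,q2)) ((p1 + c, p2),(q1,q2))"
proof (cases "cd (p2 - q2) = 0")
  case True
  then show ?thesis using assms by simp
next
  case False
  then have pos: "0 < cd (p2 - q2)" using cd_ge0[of "p2 - q2"] by simp
  obtain \<alpha> where a: "F0 (q2 - \<alpha>) = 0" "F0 (p2 - \<alpha>) = 8 * cd (p2 - q2)"
    using Fgrow[OF assms(1)] by blast
  define \<beta> where "\<beta> = c / (8 * cd (p2 - q2))"
  have b: "0 \<le> \<beta>" "\<beta> \<le> 1" using assms pos by (auto simp: \<beta>_def field_simps)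
  have s: "step2 \<alpha> \<beta> 1 ((p1,p2),(q1,q2)) = ((p1 + c, p2),(q1,q2))"
    using pos by (simp add: step2_def shear_def Fa_def a \<beta>_def)
  show ?thesis by (rule reach_step[OF b _ s[symmetric]]) simp
qed

lemma grow_q1:
  assumes "cd (p2 - q2) \<le> 1/8" "0 \<le> c" "c \<le> 8 * cd (p2 - q2)"
  shows "reach ((p1,p2),(q1,q2)) ((p1,p2),(q1 + c, q2))"
proof -
  have "cd (q2 - p2) \<le> 1/8" "c \<le> 8 * cd (q2 - p2)" using assms cd_sym[of p2 q2] by simp_all
  from reach_sw[OF grow_p1[OF this(1) assms(2) this(2), of q1 p1]] show ?thesis by (simp add: sw_def)
qed

definition D1 :: "pp \<Rightarrow> real" where "D1 P = cd (fst (fst P) - fst (snd P))"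
definition D2 :: "pp \<Rightarrow> real" where "D2 P = cd (snd (fst P) - snd (snd P))"

lemma D_cs: "D1 (cs P) = D2 P" "D2 (cs P) = D1 P"
  by (simp_all add: D1_def D2_def cs_def prod.swap_def)

lemma grow_step:
  assumes "D1 P < 1/8" "D2 P < 1/8" "D1 P \<le> D2 P" "0 < D2 P"
  shows "\<exists>Q. reach P Q \<and> (1/8 \<le> D1 Q \<or> 5 * (D1 P + D2 P) \<le> D1 Q + D2 Q)"
proof -
  obtain p1 p2 q1 q2 where P: "P = ((p1,p2),(q1,q2))" by (metis prod.collapse)
  define d1 where "d1 = D1 P"
  define d2 where "d2 = D2 P"
  have d1: "d1 = cd (p1 - q1)" and d2: "d2 = cd (p2 - q2)" by (simp_all add: d1_def d2_def D1_def D2_def P)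
  have hd2: "cd (p2 - q2) = D2 P" by (simp add: D2_def P)
  define w where "w = (p1 - q1) - of_int (round (p1 - q1))"
  have w: "\<bar>w\<bar> = d1" by (simp add: w_def d1 cd_def)
  define c where "c = min (8 * d2) (1/8 - d1)"
  have c: "0 \<le> c" "c \<le> 8 * d2" "c \<le> 1/8 - d1" using assms by (auto simp: c_def d1_def d2_def)
  have goal: "1/8 \<le> d1 + c \<or> 5 * (d1 + d2) \<le> (d1 + c) + d2"
    using assms by (auto simp: c_def d1_def d2_def min_def)
  show ?thesis
  proof (cases "0 \<le> w")
    case True
    let ?Q = "((p1 + c, p2),(q1,q2))"
    have r: "reach P ?Q" unfolding P by (rule grow_p1) (use assms c hd2 in \<open>auto simp: d2_def\<close>)
    have "(p1 + c - q1) - (w + c) = of_int (round (p1 - q1))" by (simp add: w_def)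
    then have i: "(p1 + c - q1) - (w + c) \<in> \<int>" by (metis Ints_of_int)
    have "cd (p1 + c - q1) = \<bar>w + c\<bar>"
      by (rule cd_char[OF _ i]) (use True w c in auto)
    then have "D1 ?Q = d1 + c" "D2 ?Q = d2" using True w c by (simp_all add: D1_def D2_def d2)
    then show ?thesis using r goal unfolding d1_def d2_def by metis
  next
    case False
    let ?Q = "((p1, p2),(q1 + c,q2))"
    have r: "reach P ?Q" unfolding P by (rule grow_q1) (use assms c hd2 in \<open>auto simp: d2_def\<close>)
    have "(p1 - (q1 + c)) - (w - c) = of_int (round (p1 - q1))" by (simp add: w_def)
    then have i: "(p1 - (q1 + c)) - (w - c) \<in> \<int>" by (metis Ints_of_int)
    have "cd (p1 - (q1 + c)) = \<bar>w - c\<bar>"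
      by (rule cd_char[OF _ i]) (use False w c in auto)
    then have "D1 ?Q = d1 + c" "D2 ?Q = d2" using False w c by (simp_all add: D1_def D2_def d2)
    then show ?thesis using r goal unfolding d1_def d2_def by metis
  qed
qed



lemma D_ge0: "0 \<le> D1 P" "0 \<le> D2 P" by (simp_all add: D1_def D2_def cd_ge0)

lemma grow_any:
  assumes "D1 P < 1/8" "D2 P < 1/8" "0 < D1 P + D2 P"
  shows "\<exists>Q. reach P Q \<and> (1/8 \<le> D1 Q \<or> 1/8 \<le> D2 Q \<or> 5 * (D1 P + D2 P) \<le> D1 Q + D2 Q)"
proof (cases "D1 P \<le> D2 P")
  case True
  then have "0 < D2 P" using assms D_ge0[of P] by linarith
  from grow_step[OF assms(1,2) True this] show ?thesis by blast
next
  case False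
  have a: "D1 (cs P) < 1/8" "D2 (cs P) < 1/8" "D1 (cs P) \<le> D2 (cs P)" "0 < D2 (cs P)"
    using assms False D_ge0[of P] by (simp_all add: D_cs)
  from grow_step[OF a] obtain Q where Q: "reach (cs P) Q" "1/8 \<le> D1 Q \<or> 5 * (D1 (cs P) + D2 (cs P)) \<le> D1 Q + D2 Q"
    by blast
  have "reach P (cs Q)" using reach_cs[OF Q(1)] by simp
  moreover have "1/8 \<le> D2 (cs Q) \<or> 5 * (D1 P + D2 P) \<le> D1 (cs Q) + D2 (cs Q)"
    using Q(2) by (auto simp: D_cs)
  ultimately show ?thesis by blast
qed

lemma sep_k:
  "1/4 \<le> 5^k * (D1 P + D2 P) \<Longrightarrow> \<exists>Q. reach P Q \<and> (1/8 \<le> D1 Q \<or> 1/8 \<le> D2 Q)"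
proof (induction k arbitrary: P)
  case 0
  then have "1/8 \<le> D1 P \<or> 1/8 \<le> D2 P" by auto
  then show ?case by blast
next
  case (Suc k)
  show ?case
  proof (cases "1/8 \<le> D1 P \<or> 1/8 \<le> D2 P")
    case True then show ?thesis by blast
  next
    case False
    have "0 < D1 P + D2 P"
    proof (rule ccontr)
      assume "\<not> 0 < D1 P + D2 P"
      then have "5 ^ Suc k * (D1 P + D2 P) \<le> 0"
        by (intro mult_nonneg_nonpos) auto
      then show False using Suc.prems by (simp add: ac_simps)
    qed
    from grow_any[OF _ _ this] False obtain Q1 where Q1: "reach P Q1"
      "1/8 \<le> D1 Q1 \<or> 1/8 \<le> D2 Q1 \<or> 5 * (D1 P + D2 P) \<le> D1 Q1 + D2 Q1" by force
    show ?thesis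
    proof (cases "1/8 \<le> D1 Q1 \<or> 1/8 \<le> D2 Q1")
      case True then show ?thesis using Q1 by blast
    next
      case False
      then have "5 * (D1 P + D2 P) \<le> D1 Q1 + D2 Q1" using Q1 by blast
      then have "5^k * (5 * (D1 P + D2 P)) \<le> 5^k * (D1 Q1 + D2 Q1)"
        by (intro mult_left_mono) auto
      moreover have "5 ^ Suc k * (D1 P + D2 P) = 5^k * (5 * (D1 P + D2 P))" by simp
      ultimately have "1/4 \<le> 5^k * (D1 Q1 + D2 Q1)" using Suc.prems by linarith
      from Suc.IH[OF this] obtain Q where "reach Q1 Q" "1/8 \<le> D1 Q \<or> 1/8 \<le> D2 Q" by blast
      then show ?thesis using Q1(1) by (meson rtranclp_trans)
    qed
  qed
qed

lemma sep_exists: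
  assumes "0 < D1 P + D2 P"
  shows "\<exists>Q. reach P Q \<and> (1/8 \<le> D1 Q \<or> 1/8 \<le> D2 Q)"
proof -
  obtain k where k: "1 / (4 * (D1 P + D2 P)) < 5 ^ k"
    using real_arch_pow[of 5 "1 / (4 * (D1 P + D2 P))"] by auto
  then have "1/4 \<le> 5^k * (D1 P + D2 P)" using assms by (simp add: field_simps)
  then show ?thesis by (rule sep_k)
qed

definition fsep :: "pp \<Rightarrow> bool" where "fsep P \<longleftrightarrow> 1/8 \<le> D1 P \<and> 1/8 \<le> D2 P"

lemma fsep_exists:
  assumes "0 < D1 P + D2 P"
  shows "\<exists>Q. reach P Q \<and> fsep Q"
proof -
  obtain Q where Q: "reach P Q" "1/8 \<le> D1 Q \<or> 1/8 \<le> D2 Q" using sep_exists[OF assms] by blast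
  obtain p1 p2 q1 q2 where Qe: "Q = ((p1,p2),(q1,q2))" by (metis prod.collapse)
  show ?thesis
  proof (cases "1/8 \<le> D2 Q")
    case True
    then have c: "1/8 \<le> cd (p2 - q2)" by (simp add: D2_def Qe)
    have r: "reach Q ((q1 + 1/2, p2),(q1,q2))" unfolding Qe by (rule move_p1[OF c])
    have "fsep ((q1 + 1/2, p2),(q1,q2))" using c cd_half by (simp add: fsep_def D1_def D2_def)
    then show ?thesis using r Q(1) by (meson rtranclp_trans)
  next
    case False
    then have c: "1/8 \<le> cd (p1 - q1)" using Q(2) by (simp add: D1_def Qe)
    have r: "reach Q ((p1, q2 + 1/2),(q1,q2))" unfolding Qe by (rule move_p2[OF c])
    have "fsep ((p1, q2 + 1/2),(q1,q2))" using c cd_half by (simp add: fsep_def D1_def D2_def)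
    then show ?thesis using r Q(1) by (meson rtranclp_trans)
  qed
qed

lemma fsep_reach:
  assumes "fsep P" "fsep T"
  shows "reach P T"
proof -
  obtain p1 p2 q1 q2 where Pe: "P = ((p1,p2),(q1,q2))" by (metis prod.collapse)
  obtain t1 t2 s1 s2 where Te: "T = ((t1,t2),(s1,s2))" by (metis prod.collapse)
  have c1: "1/8 \<le> cd (p1 - q1)" using assms(1) by (simp add: fsep_def D1_def Pe)
  have c2: "1/8 \<le> cd (t2 - s2)" using assms(2) by (simp add: fsep_def D2_def Te)
  have "reach ((p1,p2),(q1,q2)) ((p1,t2),(q1,q2))" by (rule move_p2[OF c1])
  moreover have "reach ((p1,t2),(q1,q2)) ((p1,t2),(q1,s2))" by (rule move_q2[OF c1])
  moreover have "reach ((p1,t2),(q1,s2)) ((t1,t2),(q1,s2))" by (rule move_p1[OF c2])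
  moreover have "reach ((t1,t2),(q1,s2)) ((t1,t2),(s1,s2))" by (rule move_q1[OF c2])
  ultimately show ?thesis unfolding Pe Te by (meson rtranclp_trans)
qed

lemma D_neg: "D1 (- P) = D1 P" "D2 (- P) = D2 P"
proof -
  have "cd (- a - - b) = cd (a - b)" for a b using cd_neg[of "a - b"] by simp
  then show "D1 (- P) = D1 P" "D2 (- P) = D2 P" by (simp_all add: D1_def D2_def)
qed

lemma geom_reach:
  assumes "0 < D1 P + D2 P" "0 < D1 T + D2 T"
  shows "reach P T"
proof -
  obtain F1 where F1: "reach P F1" "fsep F1" using fsep_exists[OF assms(1)] by blast
  have "0 < D1 (- T) + D2 (- T)" using assms(2) by (simp add: D_neg)
  then obtain F2 where F2: "reach (- T) F2" "fsep F2" using fsep_exists by blast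
  have r2: "reach (- F2) T" using reach_rev[OF F2(1)] by simp
  have "fsep (- F2)" using F2(2) by (simp add: fsep_def D_neg)
  then have "reach F1 (- F2)" using F1(2) fsep_reach by blast
  then show ?thesis using F1(1) r2 by (meson rtranclp_trans)
qed

lemma teq_D: "\<not> teq p q \<Longrightarrow> 0 < D1 (p, q) + D2 (p, q)"
proof -
  assume a: "\<not> teq p q"
  have "D1 (p,q) \<noteq> 0 \<or> D2 (p,q) \<noteq> 0"
  proof (rule ccontr)
    assume "\<not> ?thesis"
    then have "fst p - fst q \<in> \<int>" "snd p - snd q \<in> \<int>" by (simp_all add: D1_def D2_def cd_eq0)
    then have "teq p q" by (cases p, cases q) (simp add: teq_def lat_def)
    then show False using a by simp
  qed
  then show ?thesis using D_ge0[of "(p,q)"] by linarith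
qed



abbreviation U01 :: "real measure" where "U01 \<equiv> uniform_measure lborel {0..1::real}"

lemma U01_prob: "prob_space U01"
  by (rule prob_space_uniform_measure) simp_all

lemma param_prob: "prob_space param_measure"
  unfolding param_measure_def by (intro prob_space_pair U01_prob prob_space_measure_pmf)

lemma U01_pos:
  assumes "open A" "a \<in> A" "0 \<le> a" "a \<le> 1"
  shows "0 < emeasure U01 (A \<inter> {0..1})"
proof -
  obtain e where e: "0 < e" "ball a e \<subseteq> A" using assms(1,2) openE by blast
  define I where "I = {max 0 (a - e/2) .. min 1 (a + e/2)}"
  have IA: "I \<subseteq> A \<inter> {0..1}"
  proof
    fix x assume "x \<in> I"
    then have "dist a x < e" "0 \<le> x" "x \<le> 1" using e(1) by (auto simp: I_def dist_real_def)
    then show "x \<in> A \<inter> {0..1}" using e(2) by auto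
  qed
  have "0 < emeasure lborel I"
    using e(1) assms(3,4) by (simp add: I_def)
  also have "\<dots> \<le> emeasure lborel (A \<inter> {0..1})"
    using IA assms(1) by (intro emeasure_mono) auto
  finally have pos: "0 < emeasure lborel (A \<inter> {0..1})" .
  have "emeasure U01 (A \<inter> {0..1}) = emeasure lborel ({0..1} \<inter> (A \<inter> {0..1})) / emeasure lborel {0..1::real}"
    using assms(1) by (intro emeasure_uniform_measure) auto
  also have "\<dots> = emeasure lborel (A \<inter> {0..1})"
    by (simp add: divide_ennreal_def Int_absorb1)
  finally show ?thesis using pos by simp
qed

lemma box_sets:
  assumes "open A" "open B"
  shows "(A \<inter> {0..1}) \<times> ((B \<inter> {0..1}) \<times> {i}) \<in> sets param_measure"
  unfolding param_measure_def using assms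
  by (intro pair_measureI) auto

lemma box_pos:
  assumes "open A" "open B" "a \<in> A" "b \<in> B" "0 \<le> a" "a \<le> 1" "0 \<le> b" "b \<le> 1" "i \<in> {1, 2::nat}"
  shows "0 < emeasure param_measure ((A \<inter> {0..1}) \<times> ((B \<inter> {0..1}) \<times> {i}))"
proof -
  have P: "sigma_finite_measure (measure_pmf (pmf_of_set {1, 2::nat}))"
    by (rule prob_space_imp_sigma_finite[OF prob_space_measure_pmf])
  have UP: "sigma_finite_measure (U01 \<Otimes>\<^sub>M measure_pmf (pmf_of_set {1, 2::nat}))"
    by (rule prob_space_imp_sigma_finite[OF prob_space_pair[OF U01_prob prob_space_measure_pmf]])
  have 1: "0 < emeasure U01 (A \<inter> {0..1})" by (rule U01_pos[of A a]) (use assms in auto)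
  have 2: "0 < emeasure U01 (B \<inter> {0..1})" by (rule U01_pos[of B b]) (use assms in auto)
  have 3: "0 < emeasure (measure_pmf (pmf_of_set {1, 2::nat})) {i}"
    using assms(9) by (auto simp: emeasure_pmf_single ennreal_inverse_positive)
  have "emeasure param_measure ((A \<inter> {0..1}) \<times> ((B \<inter> {0..1}) \<times> {i}))
      = emeasure U01 (A \<inter> {0..1}) * (emeasure U01 (B \<inter> {0..1}) * emeasure (measure_pmf (pmf_of_set {1, 2::nat})) {i})"
  proof -
    have s1: "A \<inter> {0..1} \<in> sets U01" "B \<inter> {0..1} \<in> sets U01" using assms by auto
    have s3: "{i} \<in> sets (measure_pmf (pmf_of_set {1, 2::nat}))" by simp
    have s2: "(B \<inter> {0..1}) \<times> {i} \<in> sets (U01 \<Otimes>\<^sub>M measure_pmf (pmf_of_set {1, 2::nat}))"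
      by (rule pair_measureI[OF s1(2) s3])
    show ?thesis unfolding param_measure_def
      using sigma_finite_measure.emeasure_pair_measure_Times[OF UP s1(1) s2]
        sigma_finite_measure.emeasure_pair_measure_Times[OF P s1(2) s3]
      by simp
  qed
  then show ?thesis using 1 2 3 by (simp add: ennreal_zero_less_mult_iff)
qed



lemma phi_Suc_shear: "phi \<omega> (Suc n) p = shear (fst (\<omega> n)) (fst (snd (\<omega> n))) (snd (snd (\<omega> n))) (phi \<omega> n p)"
  by (cases "\<omega> n") (simp add: flow1_shear)

lemma phi_front: "phi \<omega> (Suc n) p = phi (\<lambda>k. \<omega> (Suc k)) n (flow1 (Vn (\<omega> 0)) p)"
  by (induction n) auto

lemma shear_lat: "k \<in> lat \<Longrightarrow> shear \<alpha> \<beta> i (p + k) = shear \<alpha> \<beta> i p + k"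
proof -
  assume k: "k \<in> lat"
  then have k1: "fst k \<in> \<int>" and k2: "snd k \<in> \<int>" by (auto simp: lat_def)
  have a: "Fa \<alpha> (b + fst k) = Fa \<alpha> b" "Fa \<alpha> (b + snd k) = Fa \<alpha> b" for b
    using F0_add_Ints[OF k1, of "b - \<alpha>"] F0_add_Ints[OF k2, of "b - \<alpha>"]
    by (simp_all add: Fa_def algebra_simps)
  show ?thesis by (simp add: shear_def a prod_eq_iff)
qed

lemma phi_lat: "k \<in> lat \<Longrightarrow> phi \<omega> n (p + k) = phi \<omega> n p + k"
  by (induction n) (simp_all add: phi_Suc_shear shear_lat del: phi.simps(2))

definition sat :: "pp set \<Rightarrow> bool" where
  "sat S \<longleftrightarrow> (\<forall>Q K. Q \<in> S \<longrightarrow> K \<in> latp \<longrightarrow> Q + K \<in> S)"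

definition robust :: "pp \<Rightarrow> pp set \<Rightarrow> bool" where
  "robust P S \<longleftrightarrow> (\<exists>n X W. (\<forall>k<n. X k \<in> sets param_measure \<and> 0 < emeasure param_measure (X k))
     \<and> open W \<and> P \<in> W \<and>
     (\<forall>Q\<in>W. \<forall>\<omega>. (\<forall>k<n. \<omega> k \<in> X k) \<longrightarrow> (phi \<omega> n (fst Q), phi \<omega> n (snd Q)) \<in> S))"

lemma robust_base: "open S \<Longrightarrow> P \<in> S \<Longrightarrow> robust P S"
  unfolding robust_def by (intro exI[of _ 0] exI[of _ "\<lambda>_. {}"] exI[of _ S]) auto

lemma open_vimage_cont: "continuous_on UNIV f \<Longrightarrow> open B \<Longrightarrow> open (f -` B)"
  using continuous_on_open_vimage[of UNIV f] by auto

lemma latp_neg: "K \<in> latp \<Longrightarrow> - K \<in> latp"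
  by (auto simp: latp_def lat_def)

lemma robust_lat:
  assumes "sat S" "K \<in> latp" "robust (P + K) S"
  shows "robust P S"
proof -
  from assms(3) obtain n X W where X: "\<forall>k<n. X k \<in> sets param_measure \<and> 0 < emeasure param_measure (X k)"
    and W: "open W" "P + K \<in> W"
    and S: "\<forall>Q\<in>W. \<forall>\<omega>. (\<forall>k<n. \<omega> k \<in> X k) \<longrightarrow> (phi \<omega> n (fst Q), phi \<omega> n (snd Q)) \<in> S"
    unfolding robust_def by blast
  let ?W = "(\<lambda>Q. Q + K) -` W"
  have "open ?W" by (rule open_vimage_cont[OF _ W(1)]) (intro continuous_intros)
  moreover have "P \<in> ?W" using W by simp
  moreover have "\<forall>Q\<in>?W. \<forall>\<omega>. (\<forall>k<n. \<omega> k \<in> X k) \<longrightarrow> (phi \<omega> n (fst Q), phi \<omega> n (snd Q)) \<in> S"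
  proof (intro ballI allI impI)
    fix Q \<omega> assume Q: "Q \<in> ?W" and w: "\<forall>k<n. \<omega> k \<in> X k"
    have k: "fst K \<in> lat" "snd K \<in> lat" using assms(2) by (auto simp: latp_def)
    have "(phi \<omega> n (fst Q + fst K), phi \<omega> n (snd Q + snd K)) \<in> S" using S Q w by auto
    then have "(phi \<omega> n (fst Q) + fst K, phi \<omega> n (snd Q) + snd K) \<in> S"
      unfolding phi_lat[OF k(1)] phi_lat[OF k(2)] .
    moreover have "(phi \<omega> n (fst Q), phi \<omega> n (snd Q)) + K = (phi \<omega> n (fst Q) + fst K, phi \<omega> n (snd Q) + snd K)"
      by (simp add: prod_eq_iff)
    ultimately have "(phi \<omega> n (fst Q), phi \<omega> n (snd Q)) + K \<in> S" by simp
    then have "(phi \<omega> n (fst Q), phi \<omega> n (snd Q)) + K + (- K) \<in> S"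
      using assms(1) latp_neg[OF assms(2)] unfolding sat_def by blast
    then show "(phi \<omega> n (fst Q), phi \<omega> n (snd Q)) \<in> S" by simp
  qed
  ultimately show ?thesis using X unfolding robust_def by blast
qed

lemma F0_cont_intro [continuous_intros]: "continuous_on A f \<Longrightarrow> continuous_on A (\<lambda>x. F0 (f x))"
  by (rule continuous_on_compose2[OF F0_continuous_on[of UNIV]]) auto

lemma step2_frac: "step2 (frac \<alpha>) \<beta> i P = step2 \<alpha> \<beta> i P"
proof -
  have "Fa (frac \<alpha>) b = Fa \<alpha> b" for b
  proof -
    have e: "b - frac \<alpha> = (b - \<alpha>) + of_int \<lfloor>\<alpha>\<rfloor>" by (simp add: frac_def)
    show ?thesis unfolding Fa_def e by (rule F0_add_int)
  qed
  then show ?thesis by (simp add: step2_def shear_def)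
qed

lemma shear_cont: "continuous_on UNIV (\<lambda>z::real \<times> real \<times> (real \<times> real). shear (fst z) (fst (snd z)) i (snd (snd z)))"
proof (cases "i = 1")
  case True
  then have e: "(\<lambda>z::real \<times> real \<times> (real \<times> real). shear (fst z) (fst (snd z)) i (snd (snd z)))
     = (\<lambda>z. (fst (snd (snd z)) + fst (snd z) * F0 (snd (snd (snd z)) - fst z), snd (snd (snd z))))"
    by (simp add: shear_def Fa_def fun_eq_iff)
  show ?thesis unfolding e by (intro continuous_intros)
next
  case False
  then have e: "(\<lambda>z::real \<times> real \<times> (real \<times> real). shear (fst z) (fst (snd z)) i (snd (snd z)))
     = (\<lambda>z. (fst (snd (snd z)), snd (snd (snd z)) + fst (snd z) * F0 (fst (snd (snd z)) - fst z)))"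
    by (simp add: shear_def Fa_def fun_eq_iff)
  show ?thesis unfolding e by (intro continuous_intros)
qed

lemma step2_cont: "continuous_on UNIV (\<lambda>z::real \<times> real \<times> pp. step2 (fst z) (fst (snd z)) i (snd (snd z)))"
proof -
  have c1: "continuous_on UNIV (\<lambda>z::real \<times> real \<times> pp. shear (fst z) (fst (snd z)) i (fst (snd (snd z))))"
    using continuous_on_compose2[OF shear_cont[of i], of UNIV "\<lambda>z::real \<times> real \<times> pp. (fst z, fst (snd z), fst (snd (snd z)))"]
    by (simp add: continuous_intros)
  have c2: "continuous_on UNIV (\<lambda>z::real \<times> real \<times> pp. shear (fst z) (fst (snd z)) i (snd (snd (snd z))))"
    using continuous_on_compose2[OF shear_cont[of i], of UNIV "\<lambda>z::real \<times> real \<times> pp. (fst z, fst (snd z), snd (snd (snd z)))"]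
    by (simp add: continuous_intros)
  show ?thesis unfolding step2_def using continuous_on_Pair[OF c1 c2] by simp
qed

lemma robust_step:
  assumes "0 \<le> \<beta>0" "\<beta>0 \<le> 1" "i \<in> {1, 2}" "robust (step2 \<alpha>0 \<beta>0 i P) S"
  shows "robust P S"
proof -
  define a0 where "a0 = frac \<alpha>0"
  have a0: "0 \<le> a0" "a0 \<le> 1" using frac_lt_1[of \<alpha>0] by (auto simp: a0_def)
  from assms(4) obtain n X W where X: "\<forall>k<n. X k \<in> sets param_measure \<and> 0 < emeasure param_measure (X k)"
    and W: "open W" "step2 a0 \<beta>0 i P \<in> W"
    and S: "\<forall>Q\<in>W. \<forall>\<omega>. (\<forall>k<n. \<omega> k \<in> X k) \<longrightarrow> (phi \<omega> n (fst Q), phi \<omega> n (snd Q)) \<in> S"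
    unfolding robust_def a0_def step2_frac by blast
  let ?g = "\<lambda>z::real \<times> real \<times> pp. step2 (fst z) (fst (snd z)) i (snd (snd z))"
  have "open (?g -` W)" by (rule open_vimage_cont[OF step2_cont W(1)])
  moreover have "(a0, \<beta>0, P) \<in> ?g -` W" using W(2) by simp
  ultimately obtain A BV where A: "open A" "open BV" "(a0, \<beta>0, P) \<in> A \<times> BV" "A \<times> BV \<subseteq> ?g -` W"
    by (rule open_prod_elim)
  have "(\<beta>0, P) \<in> BV" using A(3) by simp
  then obtain B V where B: "open B" "open V" "(\<beta>0, P) \<in> B \<times> V" "B \<times> V \<subseteq> BV"
    by (rule open_prod_elim[OF A(2)])
  define X0 where "X0 = (A \<inter> {0..1}) \<times> ((B \<inter> {0..1}) \<times> {i})"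
  define X' where "X' = case_nat X0 X"
  have X': "\<forall>k<Suc n. X' k \<in> sets param_measure \<and> 0 < emeasure param_measure (X' k)"
  proof (intro allI impI)
    fix k assume k: "k < Suc n"
    show "X' k \<in> sets param_measure \<and> 0 < emeasure param_measure (X' k)"
    proof (cases k)
      case 0
      have "a0 \<in> A" "\<beta>0 \<in> B" using A(3) B(3) by auto
      then show ?thesis unfolding X'_def X0_def using 0 box_sets[OF A(1) B(1)]
        box_pos[OF A(1) B(1) _ _ a0 assms(1,2,3)] by simp
    next
      case (Suc j)
      then show ?thesis using X k by (simp add: X'_def)
    qed
  qed
  have "\<forall>Q\<in>V. \<forall>\<omega>. (\<forall>k<Suc n. \<omega> k \<in> X' k) \<longrightarrow> (phi \<omega> (Suc n) (fst Q), phi \<omega> (Suc n) (snd Q)) \<in> S"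
  proof (intro ballI allI impI)
    fix Q \<omega> assume Q: "Q \<in> V" and w: "\<forall>k<Suc n. \<omega> k \<in> X' k"
    have "\<omega> 0 \<in> X0" using w by (auto simp: X'_def)
    then obtain \<alpha> \<beta> where o0: "\<omega> 0 = (\<alpha>, \<beta>, i)" "\<alpha> \<in> A" "\<beta> \<in> B"
      unfolding X0_def by (cases "\<omega> 0") blast
    have "(\<alpha>, \<beta>, Q) \<in> A \<times> BV" using o0 Q B by auto
    then have sW: "step2 \<alpha> \<beta> i Q \<in> W" using A(4) by auto
    have ws: "\<forall>k<n. (\<lambda>k. \<omega> (Suc k)) k \<in> X k" using w by (auto simp: X'_def)
    have "(phi (\<lambda>k. \<omega> (Suc k)) n (fst (step2 \<alpha> \<beta> i Q)), phi (\<lambda>k. \<omega> (Suc k)) n (snd (step2 \<alpha> \<beta> i Q))) \<in> S"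
      by (rule S[rule_format, of "step2 \<alpha> \<beta> i Q" "\<lambda>k. \<omega> (Suc k)", OF sW]) (use ws in simp)
    then show "(phi \<omega> (Suc n) (fst Q), phi \<omega> (Suc n) (snd Q)) \<in> S"
      by (simp only: phi_front o0(1) flow1_shear) (simp add: step2_def)
  qed
  then show ?thesis unfolding robust_def using X' B by blast
qed

lemma reach_robust:
  assumes "reach P Q" "open S" "sat S" "Q \<in> S"
  shows "robust P S"
  using assms(1)
proof (induction rule: converse_rtranclp_induct)
  case base
  then show ?case using robust_base assms by blast
next
  case (step P P')
  from step(1) show ?case
  proof (cases rule: one.cases)
    case (one_step \<beta> i \<alpha>)
    then show ?thesis using robust_step step(3) by blast
  next
    case (one_lat K)
    then show ?thesis using robust_lat assms(3) step(3) by blast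
  qed
qed



lemma F0_meas [measurable]: "F0 \<in> borel_measurable borel"
  by (rule borel_measurable_continuous_onI[OF F0_continuous_on])

lemma F0_meas_comp [measurable (raw)]: "f \<in> borel_measurable M \<Longrightarrow> (\<lambda>x. F0 (f x)) \<in> borel_measurable M"
  by (rule measurable_compose[OF _ F0_meas])

lemma G_meas: "(\<lambda>x. shear (fst (fst x)) (fst (snd (fst x))) (snd (snd (fst x))) (snd x)) \<in> param_measure \<Otimes>\<^sub>M borel \<rightarrow>\<^sub>M borel"
proof -
  let ?M = "(borel \<Otimes>\<^sub>M (borel \<Otimes>\<^sub>M count_space UNIV)) \<Otimes>\<^sub>M (borel \<Otimes>\<^sub>M borel) :: ((real \<times> real \<times> nat) \<times> (real \<times> real)) measure"
  have e: "sets (param_measure \<Otimes>\<^sub>M borel) = sets ?M"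
    unfolding param_measure_def borel_prod
    by (intro sets_pair_measure_cong) (simp_all add: sets_measure_pmf_count_space)
  have m1: "(\<lambda>x. (fst (snd x) + fst (snd (fst x)) * F0 (snd (snd x) - fst (fst x)), snd (snd x))) \<in> ?M \<rightarrow>\<^sub>M borel"
    by measurable
  have m2: "(\<lambda>x. (fst (snd x), snd (snd x) + fst (snd (fst x)) * F0 (fst (snd x) - fst (fst x)))) \<in> ?M \<rightarrow>\<^sub>M borel"
    by measurable
  have m3: "{x \<in> space ?M. snd (snd (fst x)) = 1} \<in> sets ?M"
    by measurable
  have eq: "(\<lambda>x. shear (fst (fst x)) (fst (snd (fst x))) (snd (snd (fst x))) (snd x)) = (\<lambda>x. if snd (snd (fst x)) = 1 then (fst (snd x) + fst (snd (fst x)) * F0 (snd (snd x) - fst (fst x)), snd (snd x))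
       else (fst (snd x), snd (snd x) + fst (snd (fst x)) * F0 (fst (snd x) - fst (fst x))))"
    by (simp add: fun_eq_iff shear_def Fa_def)
  have "(\<lambda>x. if snd (snd (fst x)) = 1 then (fst (snd x) + fst (snd (fst x)) * F0 (snd (snd x) - fst (fst x)), snd (snd x))
       else (fst (snd x), snd (snd x) + fst (snd (fst x)) * F0 (fst (snd x) - fst (fst x)))) \<in> ?M \<rightarrow>\<^sub>M borel"
    by (rule measurable_If[OF m1 m2 m3])
  then have "(\<lambda>x. shear (fst (fst x)) (fst (snd (fst x))) (snd (snd (fst x))) (snd x)) \<in> ?M \<rightarrow>\<^sub>M borel"
    unfolding eq .
  note m = this
  show ?thesis by (subst measurable_cong_sets[OF e refl]) (rule m)
qed

lemma phi_meas: "(\<lambda>\<omega>. phi \<omega> n p) \<in> Omega \<rightarrow>\<^sub>M borel"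
proof (induction n)
  case 0
  then show ?case by simp
next
  case (Suc n)
  have c: "(\<lambda>\<omega>. \<omega> n) \<in> Omega \<rightarrow>\<^sub>M param_measure"
    unfolding Omega_def by (rule measurable_component_singleton) simp
  have "(\<lambda>\<omega>. (\<omega> n, phi \<omega> n p)) \<in> Omega \<rightarrow>\<^sub>M param_measure \<Otimes>\<^sub>M borel"
    by (rule measurable_Pair[OF c Suc.IH])
  from measurable_compose[OF this G_meas] show ?case
    by (simp add: phi_Suc_shear del: phi.simps)
qed

lemma prod_pos_ennreal: "finite A \<Longrightarrow> (\<forall>k\<in>A. 0 < (f k::ennreal)) \<Longrightarrow> 0 < prod f A"
  by (induction A rule: finite_induct) (auto simp: ennreal_zero_less_mult_iff)



lemma lat_add: "a \<in> lat \<Longrightarrow> b \<in> lat \<Longrightarrow> a + b \<in> lat"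
  by (auto simp: lat_def)

theorem lemmaA3:
  fixes x y :: "real \<times> real" and U :: "((real \<times> real) \<times> (real \<times> real)) set"
  assumes "(x, y) \<in> Dc_lift"
    and "open U" and "U \<noteq> {}" and "U \<subseteq> Dc_lift"
  shows "\<exists>n. emeasure Omega
           {\<omega> \<in> space Omega. \<exists>(p, q) \<in> U. teq (phi \<omega> n x) p \<and> teq (phi \<omega> n y) q} > 0"
proof -
  obtain p0 q0 where pq0: "(p0, q0) \<in> U" using assms(3) by auto
  define S where "S = {Z::pp. \<exists>(p, q) \<in> U. teq (fst Z) p \<and> teq (snd Z) q}"
  have S_eq: "S = (\<Union>K\<in>latp. (\<lambda>Z. K + Z) ` U)"
  proof (intro equalityI subsetI)
    fix Z assume "Z \<in> S"
    then obtain p q where pq: "(p, q) \<in> U" "teq (fst Z) p" "teq (snd Z) q" by (auto simp: S_def)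
    have "Z - (p, q) \<in> latp" using pq by (auto simp: latp_def teq_def)
    moreover have "Z = (Z - (p, q)) + (p, q)" by simp
    ultimately show "Z \<in> (\<Union>K\<in>latp. (\<lambda>Z. K + Z) ` U)" using pq(1) by blast
  next
    fix Z assume "Z \<in> (\<Union>K\<in>latp. (\<lambda>Z. K + Z) ` U)"
    then obtain K p q where K: "K \<in> latp" "(p, q) \<in> U" "Z = K + (p, q)" by auto
    then have "teq (fst Z) p" "teq (snd Z) q" by (auto simp: teq_def latp_def)
    then show "Z \<in> S" using K(2) by (auto simp: S_def)
  qed
  have oS: "open S" unfolding S_eq using assms(2) by (intro open_UN ballI open_translation)
  have sS: "sat S"
    unfolding sat_def
  proof (intro allI impI)
    fix Q K assume Q: "Q \<in> S" and K: "K \<in> latp"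
    then obtain p q where pq: "(p, q) \<in> U" "teq (fst Q) p" "teq (snd Q) q" by (auto simp: S_def)
    have e: "fst Q + fst K - p = (fst Q - p) + fst K" "snd Q + snd K - q = (snd Q - q) + snd K" by simp_all
    have k: "fst K \<in> lat" "snd K \<in> lat" using K by (auto simp: latp_def)
    have "fst Q + fst K - p \<in> lat" "snd Q + snd K - q \<in> lat"
      unfolding e using pq k by (auto simp: teq_def intro!: lat_add)
    then have "teq (fst (Q + K)) p" "teq (snd (Q + K)) q" by (simp_all add: teq_def)
    then show "Q + K \<in> S" using pq(1) by (auto simp: S_def)
  qed
  have "0 \<in> lat" by (simp add: lat_def zero_prod_def)
  then have "teq p0 p0" "teq q0 q0" by (simp_all add: teq_def)
  then have inS: "(p0, q0) \<in> S" unfolding S_def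
    by (intro CollectI bexI[of _ "(p0, q0)"]) (simp_all add: pq0)
  have d1: "\<not> teq x y" using assms(1) by (simp add: Dc_lift_def)
  have d2: "\<not> teq p0 q0" using assms(4) pq0 by (auto simp: Dc_lift_def)
  have "reach (x, y) (p0, q0)" by (rule geom_reach[OF teq_D[OF d1] teq_D[OF d2]])
  then have "robust (x, y) S" by (rule reach_robust[OF _ oS sS inS])
  then obtain n X W where X: "\<forall>k<n. X k \<in> sets param_measure \<and> 0 < emeasure param_measure (X k)"
    and W: "(x, y) \<in> W"
    and SW: "\<forall>Q\<in>W. \<forall>\<omega>. (\<forall>k<n. \<omega> k \<in> X k) \<longrightarrow> (phi \<omega> n (fst Q), phi \<omega> n (snd Q)) \<in> S"
    unfolding robust_def by blast
  have good: "(\<forall>k<n. \<omega> k \<in> X k) \<Longrightarrow> (phi \<omega> n x, phi \<omega> n y) \<in> S" for \<omega>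
    using SW W by fastforce
  define E where "E = {\<omega> \<in> space Omega. \<exists>(p, q) \<in> U. teq (phi \<omega> n x) p \<and> teq (phi \<omega> n y) q}"
  have E_eq: "E = (\<lambda>\<omega>. (phi \<omega> n x, phi \<omega> n y)) -` S \<inter> space Omega"
    by (auto simp: E_def S_def)
  have fm: "(\<lambda>\<omega>. (phi \<omega> n x, phi \<omega> n y)) \<in> Omega \<rightarrow>\<^sub>M borel"
    using phi_meas[of n x] phi_meas[of n y] by (intro borel_measurable_Pair)
  have Esets: "E \<in> sets Omega"
    unfolding E_eq by (rule measurable_sets[OF fm borel_open[OF oS]])
  define C where "C = prod_emb UNIV (\<lambda>_. param_measure) {..<n} (Pi\<^sub>E {..<n} X)"
  have "emeasure Omega C = (\<Prod>k\<in>{..<n}. emeasure param_measure (X k))"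
    unfolding C_def Omega_def
    by (rule emeasure_PiM_emb) (use param_prob X in auto)
  also have "\<dots> > 0" by (rule prod_pos_ennreal) (use X in auto)
  finally have Cpos: "0 < emeasure Omega C" .
  have CE: "C \<subseteq> E"
  proof
    fix \<omega> assume w: "\<omega> \<in> C"
    then have sp: "\<omega> \<in> space Omega" unfolding C_def Omega_def prod_emb_def space_PiM by auto
    have "\<forall>k<n. \<omega> k \<in> X k"
    proof (intro allI impI)
      fix k assume "k < n"
      moreover have "restrict \<omega> {..<n} \<in> Pi\<^sub>E {..<n} X" using w by (auto simp: C_def prod_emb_def)
      ultimately show "\<omega> k \<in> X k" by (auto simp: PiE_def Pi_def)
    qed
    from good[OF this] sp show "\<omega> \<in> E" unfolding E_eq by auto
  qed
  have "emeasure Omega C \<le> emeasure Omega E" by (rule emeasure_mono[OF CE Esets])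
  then have "0 < emeasure Omega E" using Cpos by simp
  then show ?thesis unfolding E_def by blast
qed


end
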